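(* Let $G$ be an edge-coloured digraph. Then $\mathscr{X}_G(x)\in\mathrm{QSym}(x)$.
   Context: An edge-coloured digraph is a finite simple digraph $G$ (no loops; for distinct vertices $a,b$ at most one edge from $a$ to $b$) in which every edge is of one of three types: dashed ($a\dashrightarrow b$), solid ($a\rightarrow b$) or double ($a\Rightarrow b$). A proper vertex-colouring is $\kappa:V(G)\to\mathbb{P}$ with $\kappa(a)\ne\kappa(b)$ for dashed edges $(a,b)$, $\kappa(a)<\kappa(b)$ for solid, $\kappa(a)\le\kappa(b)$ for double. $\mathscr{X}_G(x)=\sum_\kappa\prod_{a\in V(G)}x_{\kappa(a)}$ summed over proper vertex-colourings, in commuting variables $x_1,x_2,\dots$. $\mathrm{QSym}(x)$ is the set of bounded-degree formal power series such that for each composition $(\alpha_1,\dots,\alpha_k)$ all monomials $x_{i_1}^{\alpha_1}\cdots x_{i_k}^{\alpha_k}$ with $i_1<\dots<i_k$ have the same coefficient. *)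

theory Defs
  imports Main
begin

datatype edge_type = Dashed | Solid | Double

text \<open>An edge-coloured digraph on the vertex set V: the partial map E assigns to an
  ordered pair (a,b) the type of the (unique, if any) edge from a to b.\<close>
definition ec_digraph :: "'v set \<Rightarrow> ('v \<times> 'v \<Rightarrow> edge_type option) \<Rightarrow> bool" where
  "ec_digraph V E \<longleftrightarrow> finite V \<and> (\<forall>a. E (a, a) = None) \<and>
     (\<forall>a b. E (a, b) \<noteq> None \<longrightarrow> a \<in> V \<and> b \<in> V)"

text \<open>Proper vertex-colourings with positive integer colours (represented as nat \<ge> 1);
  colourings are taken extensional (value 0 outside V) so they correspond 1-1 to maps V \<rightarrow> \<bbbP>.\<close>
definition proper_colouring :: "'v set \<Rightarrow> ('v \<times> 'v \<Rightarrow> edge_type option) \<Rightarrow> ('v \<Rightarrow> nat) \<Rightarrow> bool" where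
  "proper_colouring V E \<kappa> \<longleftrightarrow>
     (\<forall>a\<in>V. 1 \<le> \<kappa> a) \<and> (\<forall>a. a \<notin> V \<longrightarrow> \<kappa> a = 0) \<and>
     (\<forall>a b. E (a, b) = Some Dashed \<longrightarrow> \<kappa> a \<noteq> \<kappa> b) \<and>
     (\<forall>a b. E (a, b) = Some Solid \<longrightarrow> \<kappa> a < \<kappa> b) \<and>
     (\<forall>a b. E (a, b) = Some Double \<longrightarrow> \<kappa> a \<le> \<kappa> b)"

text \<open>Formal power series in commuting variables x_1, x_2, ... are represented by their
  coefficient function on monomials; a monomial is an exponent vector m :: nat \<Rightarrow> nat
  (m i = exponent of x_i).\<close>
type_synonym 'a mseries = "(nat \<Rightarrow> nat) \<Rightarrow> 'a"

text \<open>The chromatic series: coefficient of the monomial m is the number of proper colourings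
  \<kappa> with \<Prod>_a x_{\<kappa> a} = m, i.e. exactly m i vertices coloured i for every i.\<close>
definition chrom_series :: "'v set \<Rightarrow> ('v \<times> 'v \<Rightarrow> edge_type option) \<Rightarrow> nat mseries" where
  "chrom_series V E m = card {\<kappa>. proper_colouring V E \<kappa> \<and> (\<forall>i. card {a\<in>V. \<kappa> a = i} = m i)}"

text \<open>The monomial x_{i_1}^{\<alpha>_1} \<cdots> x_{i_k}^{\<alpha>_k}.\<close>
definition mono_of :: "nat list \<Rightarrow> nat list \<Rightarrow> nat \<Rightarrow> nat" where
  "mono_of is \<alpha> n = (\<Sum>t<length is. if is ! t = n then \<alpha> ! t else 0)"

definition is_composition :: "nat list \<Rightarrow> bool" where
  "is_composition \<alpha> \<longleftrightarrow> (\<forall>p\<in>set \<alpha>. 0 < p)"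

text \<open>Membership in QSym(x): the series lives in the variables x_1, x_2, ... (monomials with
  nonzero coefficient are finitely supported and do not involve index 0), has bounded degree,
  and is quasisymmetric.\<close>
definition QSym :: "'a::zero mseries set" where
  "QSym = {f.
     (\<forall>m. f m \<noteq> 0 \<longrightarrow> finite {i. m i \<noteq> 0} \<and> m 0 = 0) \<and>
     (\<exists>d. \<forall>m. f m \<noteq> 0 \<longrightarrow> (\<Sum>i\<in>{i. m i \<noteq> 0}. m i) \<le> d) \<and>
     (\<forall>\<alpha> is js. is_composition \<alpha> \<and> length is = length \<alpha> \<and> length js = length \<alpha> \<and>
        sorted_wrt (<) is \<and> sorted_wrt (<) js \<and> (\<forall>i\<in>set is. 1 \<le> i) \<and> (\<forall>j\<in>set js. 1 \<le> j)
        \<longrightarrow> f (mono_of is \<alpha>) = f (mono_of js \<alpha>))}"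

end

theory Submission
  imports Defs
begin

definition idx :: "nat list \<Rightarrow> nat \<Rightarrow> nat" where
  "idx xs c = (THE t. t < length xs \<and> xs ! t = c)"

lemma idx_nth: "distinct xs \<Longrightarrow> t < length xs \<Longrightarrow> idx xs (xs ! t) = t"
  unfolding idx_def by (rule the_equality) (auto simp: nth_eq_iff_index_eq)

definition relab :: "'v set \<Rightarrow> nat list \<Rightarrow> nat list \<Rightarrow> ('v \<Rightarrow> nat) \<Rightarrow> 'v \<Rightarrow> nat" where
  "relab V xs ys \<kappa> = (\<lambda>a. if a \<in> V then ys ! idx xs (\<kappa> a) else 0)"

lemma mono_of_nth:
  assumes "distinct xs" "t < length xs"
  shows "mono_of xs \<alpha> (xs ! t) = \<alpha> ! t"
proof -
  have "mono_of xs \<alpha> (xs ! t) = (\<Sum>s<length xs. if s = t then \<alpha> ! s else 0)"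
    unfolding mono_of_def
    by (rule sum.cong) (use assms in \<open>auto simp: nth_eq_iff_index_eq\<close>)
  also have "\<dots> = \<alpha> ! t" using assms by (simp add: sum.delta)
  finally show ?thesis .
qed

lemma mono_of_notin:
  assumes "c \<notin> set xs"
  shows "mono_of xs \<alpha> c = 0"
  unfolding mono_of_def using assms by (auto intro!: sum.neutral simp: in_set_conv_nth)

lemma sorted_less_iff:
  assumes "sorted_wrt (<) (xs::nat list)" "s < length xs" "t < length xs"
  shows "xs ! s < xs ! t \<longleftrightarrow> s < t"
proof
  assume "s < t" then show "xs ! s < xs ! t" using assms sorted_wrt_nth_less by blast
next
  assume h: "xs ! s < xs ! t"
  show "s < t"
  proof (rule ccontr)
    assume "\<not> s < t"
    then have "t < s \<or> t = s" by auto
    then show False using h assms sorted_wrt_nth_less[of "(<)" xs t s] by auto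
  qed
qed

lemma transfer:
  assumes sis: "sorted_wrt (<) is" and sjs: "sorted_wrt (<) js"
    and li: "length is = length \<alpha>" and lj: "length js = length \<alpha>"
    and comp: "is_composition \<alpha>"
    and pj: "\<forall>j\<in>set js. 1 \<le> j"
    and G: "ec_digraph V E"
    and P: "proper_colouring V E \<kappa>" and C: "\<forall>i. card {a\<in>V. \<kappa> a = i} = mono_of is \<alpha> i"
  shows "proper_colouring V E (relab V is js \<kappa>) \<and>
         (\<forall>i. card {a\<in>V. relab V is js \<kappa> a = i} = mono_of js \<alpha> i) \<and>
         relab V js is (relab V is js \<kappa>) = \<kappa>"
proof -
  have di: "distinct is" using sis by (simp add: strict_sorted_iff)
  have dj: "distinct js" using sjs by (simp add: strict_sorted_iff)
  have fin: "finite V" using G by (simp add: ec_digraph_def)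
  have rng: "\<exists>t<length is. \<kappa> a = is ! t" if "a \<in> V" for a
  proof (rule ccontr)
    assume "\<not> ?thesis"
    then have "\<kappa> a \<notin> set is" by (auto simp: in_set_conv_nth)
    then have "card {b\<in>V. \<kappa> b = \<kappa> a} = 0" using C mono_of_notin by metis
    moreover have "a \<in> {b\<in>V. \<kappa> b = \<kappa> a}" using that by auto
    ultimately show False using fin by auto
  qed
  define \<kappa>' where "\<kappa>' = relab V is js \<kappa>"
  have val: "\<kappa>' a = js ! t" if "a \<in> V" "\<kappa> a = is ! t" "t < length is" for a t
    using that di by (simp add: \<kappa>'_def relab_def idx_nth)
  have out: "\<kappa>' a = 0" if "a \<notin> V" for a using that by (simp add: \<kappa>'_def relab_def)
  have EV: "a \<in> V \<and> b \<in> V" if "E (a, b) = Some e" for a b e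
    using G that by (auto simp: ec_digraph_def)
  have cmp: "(\<kappa>' a < \<kappa>' b \<longleftrightarrow> \<kappa> a < \<kappa> b) \<and> (\<kappa>' a = \<kappa>' b \<longleftrightarrow> \<kappa> a = \<kappa> b)"
    if ab: "a \<in> V" "b \<in> V" for a b
  proof -
    obtain s where s: "s < length is" "\<kappa> a = is ! s" using rng ab by blast
    obtain t where t: "t < length is" "\<kappa> b = is ! t" using rng ab by blast
    have "\<kappa>' a = js ! s" "\<kappa>' b = js ! t" using val s t ab by auto
    moreover have "js ! s < js ! t \<longleftrightarrow> s < t" using sorted_less_iff[OF sjs] s t li lj by simp
    moreover have "is ! s < is ! t \<longleftrightarrow> s < t" using sorted_less_iff[OF sis] s t by simp
    moreover have "js ! s = js ! t \<longleftrightarrow> s = t" using dj s t li lj by (simp add: nth_eq_iff_index_eq)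
    moreover have "is ! s = is ! t \<longleftrightarrow> s = t" using di s t by (simp add: nth_eq_iff_index_eq)
    ultimately show ?thesis using s t by auto
  qed
  have P': "proper_colouring V E \<kappa>'"
    unfolding proper_colouring_def
  proof (intro conjI allI impI ballI)
    fix a assume "a \<in> V"
    then obtain s where s: "s < length is" "\<kappa> a = is ! s" using rng by blast
    then show "1 \<le> \<kappa>' a" using val[OF \<open>a \<in> V\<close> s(2) s(1)] pj li lj by (simp add: nth_mem)
  next
    fix a assume "a \<notin> V" then show "\<kappa>' a = 0" by (rule out)
  next
    fix a b assume h: "E (a, b) = Some Dashed"
    then show "\<kappa>' a \<noteq> \<kappa>' b" using EV[OF h] cmp P by (auto simp: proper_colouring_def)
  next
    fix a b assume h: "E (a, b) = Some Solid"
    then show "\<kappa>' a < \<kappa>' b" using EV[OF h] cmp P by (auto simp: proper_colouring_def)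
  next
    fix a b assume h: "E (a, b) = Some Double"
    have "\<kappa> a \<le> \<kappa> b" using h P by (auto simp: proper_colouring_def)
    then have "\<kappa> a < \<kappa> b \<or> \<kappa> a = \<kappa> b" by auto
    then show "\<kappa>' a \<le> \<kappa>' b" using EV[OF h] cmp[of a b] by auto
  qed
  have cnt: "card {a\<in>V. \<kappa>' a = i} = mono_of js \<alpha> i" for i
  proof (cases "i \<in> set js")
    case True
    then obtain t where t: "t < length js" "i = js ! t" by (auto simp: in_set_conv_nth)
    have "{a\<in>V. \<kappa>' a = i} = {a\<in>V. \<kappa> a = is ! t}"
    proof (intro set_eqI iffI)
      fix a assume a: "a \<in> {a\<in>V. \<kappa>' a = i}"
      then obtain s where s: "s < length is" "\<kappa> a = is ! s" using rng by blast
      then have "js ! s = js ! t" using a t val by auto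
      then have "s = t" using dj s t li lj by (simp add: nth_eq_iff_index_eq)
      then show "a \<in> {a\<in>V. \<kappa> a = is ! t}" using a s by auto
    next
      fix a assume a: "a \<in> {a\<in>V. \<kappa> a = is ! t}"
      then show "a \<in> {a\<in>V. \<kappa>' a = i}" using val t li lj by auto
    qed
    then show ?thesis using C t mono_of_nth[OF di, of t \<alpha>] mono_of_nth[OF dj, of t \<alpha>] li lj by simp
  next
    case False
    have "{a\<in>V. \<kappa>' a = i} = {}"
    proof (rule ccontr)
      assume "{a\<in>V. \<kappa>' a = i} \<noteq> {}"
      then obtain a where a: "a \<in> V" "\<kappa>' a = i" by auto
      then obtain s where s: "s < length is" "\<kappa> a = is ! s" using rng by blast
      then have "i = js ! s" using a val by auto
      then show False using False s li lj by (simp add: nth_mem)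
    qed
    then show ?thesis using False mono_of_notin by (metis card.empty)
  qed
  have inv: "relab V js is \<kappa>' = \<kappa>"
  proof
    fix a show "relab V js is \<kappa>' a = \<kappa> a"
    proof (cases "a \<in> V")
      case True
      then obtain s where s: "s < length is" "\<kappa> a = is ! s" using rng by blast
      then show ?thesis using True val[OF True s(2) s(1)] idx_nth[OF dj, of s] li lj
        by (simp add: relab_def)
    next
      case False then show ?thesis using P by (simp add: relab_def proper_colouring_def)
    qed
  qed
  have "proper_colouring V E \<kappa>' \<and> (\<forall>i. card {a\<in>V. \<kappa>' a = i} = mono_of js \<alpha> i) \<and>
         relab V js is \<kappa>' = \<kappa>"
    using P' cnt inv by blast
  then show ?thesis unfolding \<kappa>'_def .
qed

lemma card_nz: "card A \<noteq> 0 \<Longrightarrow> A \<noteq> {}" by auto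

theorem mainTheorem6:
  fixes V :: "'v set" and E :: "'v \<times> 'v \<Rightarrow> edge_type option"
  assumes "ec_digraph V E"
  shows "chrom_series V E \<in> QSym"
proof -
  have fin: "finite V" using assms by (simp add: ec_digraph_def)
  have ex: "\<exists>\<kappa>. proper_colouring V E \<kappa> \<and> (\<forall>i. card {a\<in>V. \<kappa> a = i} = m i)"
    if "chrom_series V E m \<noteq> 0" for m
  proof -
    have "{\<kappa>. proper_colouring V E \<kappa> \<and> (\<forall>i. card {a\<in>V. \<kappa> a = i} = m i)} \<noteq> {}"
      using that unfolding chrom_series_def by (rule card_nz)
    then show ?thesis by blast
  qed
  have sub: "{i. m i \<noteq> 0} \<subseteq> \<kappa> ` V" if "\<forall>i. card {a\<in>V. \<kappa> a = i} = m i" for m \<kappa>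
  proof
    fix i assume "i \<in> {i. m i \<noteq> 0}"
    then have "card {a\<in>V. \<kappa> a = i} \<noteq> 0" using that by simp
    then have "{a\<in>V. \<kappa> a = i} \<noteq> {}" by (rule card_nz)
    then show "i \<in> \<kappa> ` V" by auto
  qed
  have P1: "\<forall>m. chrom_series V E m \<noteq> 0 \<longrightarrow> finite {i. m i \<noteq> 0} \<and> m 0 = 0"
  proof (intro allI impI conjI)
    fix m assume "chrom_series V E m \<noteq> 0"
    then obtain \<kappa> where k: "proper_colouring V E \<kappa>" "\<forall>i. card {a\<in>V. \<kappa> a = i} = m i"
      using ex by blast
    show "finite {i. m i \<noteq> 0}" using sub[OF k(2)] fin finite_subset by blast
    have "\<forall>a\<in>V. 1 \<le> \<kappa> a" using k(1) unfolding proper_colouring_def by blast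
    then have "{a\<in>V. \<kappa> a = 0} = {}" by fastforce
    then have "card {a\<in>V. \<kappa> a = 0} = 0" by (simp only: card.empty)
    then show "m 0 = 0" using k(2)[rule_format, of 0] by linarith
  qed
  have P2: "\<forall>m. chrom_series V E m \<noteq> 0 \<longrightarrow> (\<Sum>i\<in>{i. m i \<noteq> 0}. m i) \<le> card V"
  proof (intro allI impI)
    fix m assume "chrom_series V E m \<noteq> 0"
    then obtain \<kappa> where k: "proper_colouring V E \<kappa>" "\<forall>i. card {a\<in>V. \<kappa> a = i} = m i"
      using ex by blast
    have "(\<Sum>i\<in>{i. m i \<noteq> 0}. m i) \<le> (\<Sum>i\<in>\<kappa> ` V. m i)"
      by (rule sum_mono2) (use fin sub[OF k(2)] in auto)
    also have "\<dots> = (\<Sum>i\<in>\<kappa> ` V. card {a\<in>V. \<kappa> a = i})" using k(2) by simp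
    also have "\<dots> = card V"
      using sum.image_gen[OF fin, of "\<lambda>_. 1::nat" \<kappa>] by simp
    finally show "(\<Sum>i\<in>{i. m i \<noteq> 0}. m i) \<le> card V" .
  qed
  have P3: "chrom_series V E (mono_of is \<alpha>) = chrom_series V E (mono_of js \<alpha>)"
    if h: "is_composition \<alpha>" "length is = length \<alpha>" "length js = length \<alpha>"
        "sorted_wrt (<) is" "sorted_wrt (<) js" "\<forall>i\<in>set is. 1 \<le> i" "\<forall>j\<in>set js. 1 \<le> j"
    for \<alpha> "is" js
  proof -
    define A where "A xs = {\<kappa>. proper_colouring V E \<kappa> \<and> (\<forall>i. card {a\<in>V. \<kappa> a = i} = mono_of xs \<alpha> i)}"
      for xs
    have T1: "\<And>\<kappa>. \<kappa> \<in> A is \<Longrightarrow> relab V is js \<kappa> \<in> A js \<and> relab V js is (relab V is js \<kappa>) = \<kappa>"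
      using transfer[OF h(4) h(5) h(2) h(3) h(1) h(7) assms] unfolding A_def by simp
    have T2: "\<And>\<kappa>. \<kappa> \<in> A js \<Longrightarrow> relab V js is \<kappa> \<in> A is \<and> relab V is js (relab V js is \<kappa>) = \<kappa>"
      using transfer[OF h(5) h(4) h(3) h(2) h(1) h(6) assms] unfolding A_def by simp
    have "bij_betw (relab V is js) (A is) (A js)"
      by (rule bij_betw_byWitness[where f'="relab V js is"]) (use T1 T2 in blast)+
    then have "card (A is) = card (A js)" by (rule bij_betw_same_card)
    then show ?thesis unfolding chrom_series_def A_def by simp
  qed
  show ?thesis unfolding QSym_def
  proof (intro CollectI conjI)
    show "\<forall>m. chrom_series V E m \<noteq> 0 \<longrightarrow> finite {i. m i \<noteq> 0} \<and> m 0 = 0" by (rule P1)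
    show "\<exists>d. \<forall>m. chrom_series V E m \<noteq> 0 \<longrightarrow> (\<Sum>i\<in>{i. m i \<noteq> 0}. m i) \<le> d"
      using P2 by (rule exI)
  next
    show "\<forall>\<alpha> is js. is_composition \<alpha> \<and> length is = length \<alpha> \<and> length js = length \<alpha> \<and>
        sorted_wrt (<) is \<and> sorted_wrt (<) js \<and> (\<forall>i\<in>set is. 1 \<le> i) \<and> (\<forall>j\<in>set js. 1 \<le> j)
        \<longrightarrow> chrom_series V E (mono_of is \<alpha>) = chrom_series V E (mono_of js \<alpha>)"
      apply (intro allI impI)
      apply (elim conjE)
      apply (rule P3)
      apply assumption+
      done
  qed
qed

end
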